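(* Let $2\le d\le D$ be integers and let $g:(1,\infty)\to(0,\infty)$ be non-decreasing with $$d\,g(x)\le g\!\left(\tfrac{d^2}{d-1}x\right)\quad\text{and}\quad g\!\left(\tfrac{D^2}{D-1}x\right)\le D\,g(x)\quad\text{for all }x.$$ Then there exist a sequence $\bar d\in\{d,D\}^{\mathbb N}$ and a constant $C\ge1$ such that $\frac1C g(x)\le h_{\bar d}(x)\le C g(x)$ for all $x>1$.
   Context: For a sequence $\bar d=(d_i)_{i\ge0}$ of integers $\ge2$, $p_i=\frac{d_i-1}{d_i^2}$. For real $x>1$, $k(x)$ is the unique integer $k\ge0$ with $\frac{1}{p_0\cdots p_{k}}\ge x>\frac{1}{p_0\cdots p_{k-1}}$ (empty product $=1$), and $h_{\bar d}(x)=d_0d_1\cdots d_{k(x)}$. *)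

theory Defs
  imports Complex_Main
begin

definition pseq :: "(nat \<Rightarrow> nat) \<Rightarrow> nat \<Rightarrow> real" where
  "pseq dd i = (real (dd i) - 1) / (real (dd i))^2"

definition kidx :: "(nat \<Rightarrow> nat) \<Rightarrow> real \<Rightarrow> nat" where
  "kidx dd x = (THE k. x \<le> 1 / (\<Prod>i\<in>{..k}. pseq dd i) \<and> 1 / (\<Prod>i\<in>{..<k}. pseq dd i) < x)"

definition hseq :: "(nat \<Rightarrow> nat) \<Rightarrow> real \<Rightarrow> real" where
  "hseq dd x = (\<Prod>i\<in>{..kidx dd x}. real (dd i))"

end

theory Submission
  imports Defs
begin

definition qf :: "nat \<Rightarrow> real" where "qf e = (real e)^2 / (real e - 1)"

lemma qf_ge4: "2 \<le> e \<Longrightarrow> qf e \<ge> 4"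
proof -
  assume "2 \<le> e"
  hence h: "real e - 1 > 0" by simp
  have "4 * (real e - 1) \<le> (real e)^2" using sum_squares_ge_zero[of "real e - 2" 0]
    by (simp add: power2_eq_square algebra_simps)
  thus ?thesis using h unfolding qf_def by (simp add: field_simps)
qed

lemma qf_mono: "2 \<le> e \<Longrightarrow> e \<le> E \<Longrightarrow> qf e \<le> qf E"
proof -
  assume a: "2 \<le> e" "e \<le> E"
  define x where "x = real e" define y where "y = real E"
  have x: "x \<ge> 2" "x \<le> y" using a unfolding x_def y_def by auto
  have "1 * 1 \<le> (x - 1) * (y - 1)" using x by (intro mult_mono) auto
  hence "x*y \<ge> x + y" by (simp add: algebra_simps)
  hence "(y - x) * (x * y) \<ge> (y - x) * (x + y)" using x by (intro mult_left_mono) auto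
  hence "x^2 * (y - 1) \<le> y^2 * (x - 1)" by (simp add: power2_eq_square algebra_simps)
  hence "x^2 / (x - 1) \<le> y^2 / (y - 1)" using x by (simp add: field_simps)
  thus ?thesis unfolding qf_def x_def y_def .
qed

definition Pf :: "(nat \<Rightarrow> nat) \<Rightarrow> nat \<Rightarrow> real" where
  "Pf dd n = (\<Prod>i<n. qf (dd i))"

lemma inv_prod:
  assumes "\<forall>i. dd i \<ge> 2"
  shows "1 / (\<Prod>i<n. pseq dd i) = Pf dd n"
proof -
  have "\<And>i. qf (dd i) = 1 / pseq dd i" using assms unfolding qf_def pseq_def by simp
  hence "Pf dd n = (\<Prod>i<n. 1 / pseq dd i)" unfolding Pf_def by simp
  also have "\<dots> = 1 / (\<Prod>i<n. pseq dd i)" by (simp add: prod_dividef)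
  finally show ?thesis by simp
qed

lemma Pf_pos: "\<forall>i. dd i \<ge> 2 \<Longrightarrow> Pf dd n > 0"
  unfolding Pf_def using qf_ge4 by (intro prod_pos) (smt (verit))

lemma Pf_Suc: "Pf dd (Suc n) = Pf dd n * qf (dd n)"
  unfolding Pf_def by simp

lemma Pf_smono: assumes "\<forall>i. dd i \<ge> 2" "m < n" shows "Pf dd m < Pf dd n"
proof (rule lift_Suc_mono_less[OF _ assms(2)])
  fix k
  have "Pf dd k > 0" using Pf_pos assms by blast
  moreover have "qf (dd k) \<ge> 4" using qf_ge4 assms by blast
  ultimately have "Pf dd k * 1 < Pf dd k * qf (dd k)" by (intro mult_strict_left_mono) auto
  thus "Pf dd k < Pf dd (Suc k)" unfolding Pf_Suc by simp
qed

lemma Pf_ge: "\<forall>i. dd i \<ge> 2 \<Longrightarrow> Pf dd n \<ge> 4^n"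
proof (induction n)
  case 0 thus ?case by (simp add: Pf_def)
next
  case (Suc n)
  have "qf (dd n) \<ge> 4" using qf_ge4 Suc.prems by blast
  thus ?case unfolding Pf_Suc using Suc mult_mono[of "4^n" "Pf dd n" 4 "qf (dd n)"]
    Pf_pos[OF Suc.prems, of n] by (simp add: mult.commute)
qed

lemma kidx_eq:
  assumes d2: "\<forall>i. dd i \<ge> 2" and "Pf dd k < x" "x \<le> Pf dd (Suc k)"
  shows "kidx dd x = k"
proof -
  have e: "\<And>m. 1/(\<Prod>i\<in>{..m}. pseq dd i) = Pf dd (Suc m)"
    using inv_prod[OF d2] by (metis lessThan_Suc_atMost)
  have e2: "\<And>m. 1/(\<Prod>i\<in>{..<m}. pseq dd i) = Pf dd m"
    using inv_prod[OF d2] by metis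
  show ?thesis unfolding kidx_def e e2
proof (rule the_equality)
  show "x \<le> Pf dd (Suc k) \<and> Pf dd k < x" using assms by simp
next
  fix m assume "x \<le> Pf dd (Suc m) \<and> Pf dd m < x"
  hence m: "x \<le> Pf dd (Suc m)" "Pf dd m < x" by auto
  have mono: "\<And>a b. a \<le> b \<Longrightarrow> Pf dd a \<le> Pf dd b"
    using Pf_smono[OF d2] by (metis le_less)
  show "m = k"
  proof (rule ccontr)
    assume "m \<noteq> k"
    hence "Suc m \<le> k \<or> Suc k \<le> m" by auto
    thus False using mono[of "Suc m" k] mono[of "Suc k" m] m assms by auto
  qed
qed
qed

lemma kidx_exists:
  assumes d2: "\<forall>i. dd i \<ge> 2" and x: "x > 1"
  shows "\<exists>k. Pf dd k < x \<and> x \<le> Pf dd (Suc k)"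
proof -
  obtain n where "x < 4^n" using real_arch_pow[of 4 x] by auto
  hence "x \<le> Pf dd n" using Pf_ge[OF d2, of n] by simp
  thus ?thesis
  proof (induction n)
    case 0 thus ?case using x by (simp add: Pf_def)
  next
    case (Suc n) thus ?case by (cases "x \<le> Pf dd n") (auto simp: not_le)
  qed
qed

primrec stf :: "(real \<Rightarrow> real) \<Rightarrow> nat \<Rightarrow> nat \<Rightarrow> nat \<Rightarrow> real \<times> real" where
  "stf g d D 0 = (qf d, real d)"
| "stf g d D (Suc k) = (if g (fst (stf g d D k)) \<le> snd (stf g d D k)
     then (qf d * fst (stf g d D k), real d * snd (stf g d D k))
     else (qf D * fst (stf g d D k), real D * snd (stf g d D k)))"

definition ddf :: "(real \<Rightarrow> real) \<Rightarrow> nat \<Rightarrow> nat \<Rightarrow> nat \<Rightarrow> nat" where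
  "ddf g d D k = (case k of 0 \<Rightarrow> d | Suc j \<Rightarrow>
      (if g (fst (stf g d D j)) \<le> snd (stf g d D j) then d else D))"

lemma stf_eq: "fst (stf g d D k) = Pf (ddf g d D) (Suc k) \<and>
   snd (stf g d D k) = (\<Prod>i<Suc k. real (ddf g d D i))"
proof (induction k)
  case 0 thus ?case by (simp add: Pf_def ddf_def)
next
  case (Suc k)
  thus ?case by (simp add: Pf_Suc[of _ "Suc k"] ddf_def mult.commute)
qed

theorem mainTheorem9:
  fixes d D :: nat and g :: "real \<Rightarrow> real"
  assumes "2 \<le> d" and "d \<le> D"
    and "\<And>x. x > 1 \<Longrightarrow> g x > 0"
    and "\<And>x y. 1 < x \<Longrightarrow> x \<le> y \<Longrightarrow> g x \<le> g y"
    and "\<And>x. x > 1 \<Longrightarrow> real d * g x \<le> g ((real d)^2 / (real d - 1) * x)"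
    and "\<And>x. x > 1 \<Longrightarrow> g ((real D)^2 / (real D - 1) * x) \<le> real D * g x"
  shows "\<exists>dd :: nat \<Rightarrow> nat. (\<forall>i. dd i \<in> {d, D}) \<and>
           (\<exists>C::real. C \<ge> 1 \<and> (\<forall>x>1. g x / C \<le> hseq dd x \<and> hseq dd x \<le> C * g x))"
proof -
  note gpos = assms(3) and gmono = assms(4)
  have gd: "\<And>x. x > 1 \<Longrightarrow> real d * g x \<le> g (qf d * x)" using assms(5) unfolding qf_def .
  have gD: "\<And>x. x > 1 \<Longrightarrow> g (qf D * x) \<le> real D * g x" using assms(6) unfolding qf_def .
  have qdD: "qf d \<le> qf D" using qf_mono assms(1,2) .
  have qd4: "qf d \<ge> 4" using qf_ge4 assms(1) .
  define dd where "dd = ddf g d D"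
  define Q where "Q = (\<lambda>k. fst (stf g d D k))"
  define H where "H = (\<lambda>k. snd (stf g d D k))"
  have ddin: "\<forall>i. dd i \<in> {d, D}" unfolding dd_def ddf_def by (auto split: nat.split)
  have d2: "\<forall>i. dd i \<ge> 2" using ddin assms(1,2) by auto
  have QP: "\<And>k. Q k = Pf dd (Suc k)" unfolding Q_def dd_def using stf_eq by blast
  have HP: "\<And>k. H k = (\<Prod>i<Suc k. real (dd i))" unfolding H_def dd_def using stf_eq by blast
  have Q1: "\<And>k. Q k > 1"
  proof -
    fix k
    have "(1::real) \<le> 4^k" by simp
    moreover have "4 * 4 ^ k \<le> Q k" using QP Pf_ge[OF d2, of "Suc k"] by simp
    ultimately show "Q k > 1" by linarith
  qed
  have stepd: "\<And>k. g (Q k) \<le> H k \<Longrightarrow> Q (Suc k) = qf d * Q k \<and> H (Suc k) = real d * H k"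
    unfolding Q_def H_def by simp
  have stepD: "\<And>k. \<not> g (Q k) \<le> H k \<Longrightarrow> Q (Suc k) = qf D * Q k \<and> H (Suc k) = real D * H k"
    unfolding Q_def H_def by simp
  define r0 where "r0 = real d / g (qf d)"
  define rmin where "rmin = min r0 (real d / real D)"
  define rmax where "rmax = max r0 (real D / real d)"
  have gqd: "g (qf d) > 0" using gpos qd4 by simp
  have r0pos: "r0 > 0" unfolding r0_def using gqd assms(1) by simp
  have rminpos: "rmin > 0" unfolding rmin_def using r0pos assms(1,2) by simp
  have rmaxpos: "rmax \<ge> 0" unfolding rmax_def using r0pos by simp
  have rmin_le: "rmin \<le> real d / real D" unfolding rmin_def by simp
  have rmax_ge: "rmax \<ge> real D / real d" unfolding rmax_def by simp
  have Dpos: "real D > 0" "real d > 0" using assms(1,2) by auto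
  have inv: "rmin * g (Q k) \<le> H k \<and> H k \<le> rmax * g (Q k)" for k
  proof (induction k)
    case 0
    have "H 0 = r0 * g (Q 0)" unfolding H_def Q_def r0_def using gqd by simp
    moreover have "Q 0 = qf d" unfolding Q_def by simp
    ultimately have h0: "H 0 = r0 * g (Q 0)" and gq0: "g (Q 0) > 0" using gqd by auto
    have "rmin * g (Q 0) \<le> r0 * g (Q 0)" unfolding rmin_def using gq0
      by (intro mult_right_mono) auto
    moreover have "r0 * g (Q 0) \<le> rmax * g (Q 0)" unfolding rmax_def using gq0
      by (intro mult_right_mono) auto
    ultimately show ?case using h0 by simp
  next
    case (Suc k)
    have gQ: "g (Q k) > 0" using gpos Q1 by blast
    have lo: "real d * g (Q k) \<le> g (qf d * Q k)" using gd Q1 by blast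
    have hi: "g (qf D * Q k) \<le> real D * g (Q k)" using gD Q1 by blast
    have mono1: "g (qf d * Q k) \<le> g (qf D * Q k)"
    proof (rule gmono)
      have "Q k \<le> qf d * Q k" using Q1[of k] qd4 by simp
      thus "1 < qf d * Q k" using Q1[of k] by linarith
      show "qf d * Q k \<le> qf D * Q k" using Q1[of k] qdD by (intro mult_right_mono) auto
    qed
    show ?case
    proof (cases "g (Q k) \<le> H k")
      case True
      note st = stepd[OF True]
      have a: "H (Suc k) \<le> rmax * g (Q (Suc k))"
      proof -
        have "H (Suc k) = real d * H k" using st by simp
        also have "\<dots> \<le> real d * (rmax * g (Q k))" using Suc Dpos by (intro mult_left_mono) auto
        also have "\<dots> = rmax * (real d * g (Q k))" by simp
        also have "\<dots> \<le> rmax * g (Q (Suc k))" using st lo rmaxpos by (intro mult_left_mono) auto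
        finally show ?thesis .
      qed
      have b: "rmin * g (Q (Suc k)) \<le> H (Suc k)"
      proof -
        have "rmin * g (Q (Suc k)) \<le> rmin * (real D * g (Q k))"
          using st mono1 hi rminpos by (intro mult_left_mono) auto
        also have "\<dots> \<le> (real d / real D) * (real D * g (Q k))"
          using rmin_le gQ Dpos by (intro mult_right_mono) auto
        also have "\<dots> = real d * g (Q k)" using Dpos by simp
        also have "\<dots> \<le> real d * H k" using True by (intro mult_left_mono) auto
        finally show ?thesis using st by simp
      qed
      show ?thesis using a b by simp
    next
      case False
      note st = stepD[OF False]
      have a: "H (Suc k) \<le> rmax * g (Q (Suc k))"
      proof -
        have "H (Suc k) = real D * H k" using st by simp
        also have "\<dots> \<le> real D * g (Q k)" using False Dpos by simp
        also have "\<dots> = (real D / real d) * (real d * g (Q k))" using Dpos by simp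
        also have "\<dots> \<le> rmax * (real d * g (Q k))" using rmax_ge gQ Dpos
          by (intro mult_right_mono) auto
        also have "\<dots> \<le> rmax * g (Q (Suc k))" using st lo mono1 rmaxpos
          by (intro mult_left_mono) auto
        finally show ?thesis .
      qed
      have b: "rmin * g (Q (Suc k)) \<le> H (Suc k)"
      proof -
        have "rmin * g (Q (Suc k)) \<le> rmin * (real D * g (Q k))"
          using st hi rminpos by (intro mult_left_mono) auto
        also have "\<dots> = real D * (rmin * g (Q k))" by simp
        also have "\<dots> \<le> real D * H k" using Suc Dpos by (intro mult_left_mono) auto
        finally show ?thesis using st by simp
      qed
      show ?thesis using a b by simp
    qed
  qed
  define C where "C = max 1 (max (rmax * real D) (1 / rmin))"
  have C1: "C \<ge> 1" unfolding C_def by simp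
  have main: "g x / C \<le> hseq dd x \<and> hseq dd x \<le> C * g x" if x: "x > 1" for x
  proof -
    obtain k where k: "Pf dd k < x" "x \<le> Pf dd (Suc k)" using kidx_exists[OF d2 x] by blast
    have hk: "hseq dd x = H k" unfolding hseq_def kidx_eq[OF d2 k] HP
      by (simp add: lessThan_Suc_atMost)
    have gx: "g x > 0" using gpos x by blast
    have gxQ: "g x \<le> g (Q k)" using gmono x k QP by simp
    have QqD: "Q k \<le> qf D * x"
    proof -
      have "Q k = Pf dd k * qf (dd k)" using QP Pf_Suc by simp
      also have "\<dots> \<le> x * qf D"
      proof (rule mult_mono)
        show "Pf dd k \<le> x" using k by simp
        have "dd k \<le> D" using ddin assms(2) by (metis empty_iff insert_iff order_refl)
        thus "qf (dd k) \<le> qf D" using qf_mono d2 by blast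
        show "0 \<le> x" using x by simp
        show "0 \<le> qf (dd k)" using qf_ge4[of "dd k"] d2 by force
      qed
      finally show ?thesis by (simp add: mult.commute)
    qed
    have gQx: "g (Q k) \<le> real D * g x"
      using gmono[OF Q1[of k] QqD] gD[OF x] by simp
    have lower: "g x / C \<le> H k"
    proof -
      have "g x / C \<le> g x / (1 / rmin)"
        using gx rminpos C1 unfolding C_def by (intro divide_left_mono) auto
      also have "\<dots> = rmin * g x" by simp
      also have "\<dots> \<le> rmin * g (Q k)" using gxQ rminpos by simp
      also have "\<dots> \<le> H k" using inv by blast
      finally show ?thesis .
    qed
    have upper: "H k \<le> C * g x"
    proof -
      have "H k \<le> rmax * g (Q k)" using inv by blast
      also have "\<dots> \<le> rmax * (real D * g x)" using gQx rmaxpos by (intro mult_left_mono) auto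
      also have "\<dots> = (rmax * real D) * g x" by simp
      also have "\<dots> \<le> C * g x" unfolding C_def using gx by (intro mult_right_mono) auto
      finally show ?thesis .
    qed
    show ?thesis using hk lower upper by simp
  qed
  show ?thesis using ddin C1 main by blast
qed

end
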